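(* Let $f:\mathbb{N}_0^n\to[0,\infty)$ be subadditive and suppose there is a constant $D_0$ with $f(\boldsymbol k)-f(\boldsymbol k+\boldsymbol e_i)\le D_0$ for all $\boldsymbol k\in\mathbb{N}_0^n$, $i=1,\dots,n$. Extend $f$ to $\mathbb{R}_0^n$ by $f(\boldsymbol r)=f(\lceil\boldsymbol r\rceil)$ and let $\hat f(\boldsymbol r)=\lim_{t\to\infty}f(t\boldsymbol r)/t$. Then $\hat f$ is subadditive and convex on $\mathbb{R}_0^n$, and Lipschitz: $|\hat f(\boldsymbol r)-\hat f(\boldsymbol s)|\le D\sum_{i=1}^n|r_i-s_i|$ with $D=\max\{f(\boldsymbol e_1),\dots,f(\boldsymbol e_n),D_0\}$. Moreover, for every sequence $\boldsymbol r_t\in\mathbb{R}_0^n$ converging to a finite $\boldsymbol\lambda$, $\lim_{t\to\infty}f(t\boldsymbol r_t)/t=\hat f(\boldsymbol\lambda)$.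
   Context: $\boldsymbol e_i$ is the $i$-th unit vector. A function $f:\mathbb{N}_0^n\to[0,\infty)$ is subadditive if $f(\boldsymbol k+\boldsymbol m)\le f(\boldsymbol k)+f(\boldsymbol m)$. The limit $\hat f(\boldsymbol r)$ exists and is finite and positively homogeneous for any nonnegative subadditive $f$ (so it is well defined here). Ceilings are coordinatewise. *)

theory Defs
  imports "HOL-Analysis.Analysis"
begin

text \<open>Points of N_0^n are vectors nat^'n, with the dimension n = CARD('n).
  The unit vector e_i is axis i 1.\<close>

definition subadditive_nat :: "(nat^'n \<Rightarrow> real) \<Rightarrow> bool" where
  "subadditive_nat f \<longleftrightarrow> (\<forall>k m. f (k + m) \<le> f k + f m)"

definition nonneg_orthant :: "(real^'n) set" where
  "nonneg_orthant = {r. \<forall>i. 0 \<le> r $ i}"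

definition fext :: "(nat^'n \<Rightarrow> real) \<Rightarrow> real^'n \<Rightarrow> real" where
  "fext f r = f (\<chi> i. nat \<lceil>r $ i\<rceil>)"

definition fhat :: "(nat^'n \<Rightarrow> real) \<Rightarrow> real^'n \<Rightarrow> real" where
  "fhat f r = Lim at_top (\<lambda>t::real. fext f (t *\<^sub>R r) / t)"

end

theory Submission
  imports Defs
begin
lemma natlip: "\<bar>real (nat a) - real (nat b)\<bar> \<le> \<bar>real_of_int a - real_of_int b\<bar>"
  by (cases "a \<ge> 0"; cases "b \<ge> 0") auto
lemma c1: fixes x y :: real shows "\<bar>real (nat \<lceil>x\<rceil>) - real (nat \<lceil>y\<rceil>)\<bar> \<le> \<bar>x - y\<bar> + 1"
proof -
  have h: "of_int \<lceil>x\<rceil> - 1 < x" "x \<le> of_int \<lceil>x\<rceil>" "of_int \<lceil>y\<rceil> - 1 < y" "y \<le> of_int \<lceil>y\<rceil>"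
    by (auto simp: ceiling_correct)
  have "\<bar>real (nat \<lceil>x\<rceil>) - real (nat \<lceil>y\<rceil>)\<bar> \<le> \<bar>real_of_int \<lceil>x\<rceil> - real_of_int \<lceil>y\<rceil>\<bar>"
    by (rule natlip)
  also have "\<dots> \<le> \<bar>x - y\<bar> + 1" using h by linarith
  finally show ?thesis .
qed
lemma c2: fixes x y :: real assumes "(0\<le>x \<and> 0\<le>y) \<or> (x\<le>0 \<and> y\<le>0)"
  shows "\<bar>real (nat \<lceil>x+y\<rceil>) - (real (nat \<lceil>x\<rceil>) + real (nat \<lceil>y\<rceil>))\<bar> \<le> 1"
proof -
  have h: "of_int \<lceil>x\<rceil> - 1 < x" "x \<le> of_int \<lceil>x\<rceil>" "of_int \<lceil>y\<rceil> - 1 < y" "y \<le> of_int \<lceil>y\<rceil>"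
     "of_int \<lceil>x+y\<rceil> - 1 < x+y" "x+y \<le> of_int \<lceil>x+y\<rceil>"
    by (auto simp: ceiling_correct)
  have "real_of_int \<lceil>x+y\<rceil> < real_of_int (\<lceil>x\<rceil> + \<lceil>y\<rceil>) + 1"
    unfolding of_int_add of_int_1 using h by linarith
  moreover have "real_of_int (\<lceil>x\<rceil> + \<lceil>y\<rceil>) < real_of_int (\<lceil>x+y\<rceil> + 1) + 1" 
    unfolding of_int_add of_int_1 using h by linarith
  ultimately have a: "\<lceil>x+y\<rceil> \<le> \<lceil>x\<rceil> + \<lceil>y\<rceil>" "\<lceil>x\<rceil> + \<lceil>y\<rceil> \<le> \<lceil>x+y\<rceil> + 1"
    by (metis of_int_1 of_int_add of_int_less_iff zless_add1_eq order_less_imp_le order_le_less)+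
  show ?thesis
  proof (cases "0 \<le> x \<and> 0 \<le> y")
    case True
    then have "\<lceil>x\<rceil> \<ge> 0" "\<lceil>y\<rceil> \<ge> 0" "\<lceil>x+y\<rceil> \<ge> 0" by auto
    with a show ?thesis by (auto simp: abs_if)
  next
    case False
    with assms have "\<lceil>x\<rceil> \<le> 0" "\<lceil>y\<rceil> \<le> 0" "\<lceil>x+y\<rceil> \<le> 0" by auto
    then show ?thesis by auto
  qed
qed
lemma axis_Suc: "axis j (Suc c) = axis j c + axis j (1::nat)"
  by (simp add: axis_def vec_eq_iff)

lemma step_c:
  fixes f :: "nat^'n \<Rightarrow> real"
  assumes step: "\<And>k i. \<bar>f (k + axis i 1) - f k\<bar> \<le> D"
  shows "\<bar>f (x + axis j c) - f x\<bar> \<le> D * real c"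
proof (induction c)
  case 0
  have z: "(axis j (0::nat) :: nat^'n) = 0" by (simp add: vec_eq_iff axis_def)
  show ?case unfolding z by simp
next
  case (Suc c)
  have e: "x + axis j (Suc c) = (x + axis j c) + axis j 1"
    by (simp only: axis_Suc add.assoc)
  have s1: "\<bar>f ((x + axis j c) + axis j 1) - f (x + axis j c)\<bar> \<le> D" by (rule step)
  have "\<bar>f (x + axis j (Suc c)) - f x\<bar> \<le> \<bar>f ((x + axis j c) + axis j 1) - f (x + axis j c)\<bar> + \<bar>f (x + axis j c) - f x\<bar>"
    unfolding e by linarith
  also have "\<dots> \<le> D + D * real c" using s1 Suc by linarith
  also have "\<dots> = D * real (Suc c)" by (simp add: algebra_simps)
  finally show ?case .
qed

lemma up_set:
  fixes f :: "nat^'n \<Rightarrow> real"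
  assumes step: "\<And>k i. \<bar>f (k + axis i 1) - f k\<bar> \<le> D"
  shows "finite S \<Longrightarrow> \<bar>f (k + (\<chi> i. if i \<in> S then d$i else 0)) - f k\<bar> \<le> D * (\<Sum>i\<in>S. real (d$i))"
proof (induction S rule: finite_induct)
  case empty
  have "(\<chi> i. if i \<in> {} then d$i else 0) = (0::nat^'n)" by (simp add: vec_eq_iff)
  then show ?case by simp
next
  case (insert j S)
  define v where "v = (\<chi> i. if i \<in> S then d$i else 0)"
  have e: "k + (\<chi> i. if i \<in> insert j S then d$i else 0) = (k + v) + axis j (d$j)"
    using insert(2) by (auto simp: vec_eq_iff axis_def v_def)
  have 1: "\<bar>f ((k + v) + axis j (d$j)) - f (k + v)\<bar> \<le> D * real (d$j)"
    by (rule step_c[OF step])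
  have 2: "\<bar>f (k + v) - f k\<bar> \<le> D * (\<Sum>i\<in>S. real (d$i))" using insert(3) v_def by simp
  have "\<bar>f (k + (\<chi> i. if i \<in> insert j S then d$i else 0)) - f k\<bar>
     \<le> \<bar>f ((k + v) + axis j (d$j)) - f (k + v)\<bar> + \<bar>f (k + v) - f k\<bar>" unfolding e by linarith
  also have "\<dots> \<le> D * real (d$j) + D * (\<Sum>i\<in>S. real (d$i))" using 1 2 by linarith
  also have "\<dots> = D * (\<Sum>i\<in>insert j S. real (d$i))" using insert(1,2) by (simp add: distrib_left)
  finally show ?case .
qed

lemma minabs: "real (a - min a b) + real (b - min a b) = \<bar>real a - real (b::nat)\<bar>"
  by (cases "a \<le> b") (simp_all add: min_def of_nat_diff)

lemma lip_nat:
  fixes f :: "nat^'n \<Rightarrow> real"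
  assumes step: "\<And>k i. \<bar>f (k + axis i 1) - f k\<bar> \<le> D"
  shows "\<bar>f k - f m\<bar> \<le> D * (\<Sum>i\<in>UNIV. \<bar>real (k$i) - real (m$i)\<bar>)"
proof -
  have up: "\<bar>f (p + d) - f p\<bar> \<le> D * (\<Sum>i\<in>UNIV. real (d$i))" for p d :: "nat^'n"
  proof -
    have "(\<chi> i. if i \<in> UNIV then d$i else 0) = d" by (simp add: vec_eq_iff)
    then show ?thesis using up_set[OF step, of UNIV p d] by simp
  qed
  define p where "p = (\<chi> i. min (k$i) (m$i))"
  define d1 where "d1 = (\<chi> i. k$i - p$i)"
  define d2 where "d2 = (\<chi> i. m$i - p$i)"
  have k: "k = p + d1" and m: "m = p + d2" by (auto simp: vec_eq_iff p_def d1_def d2_def)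
  have s: "(\<Sum>i\<in>UNIV. real (d1$i)) + (\<Sum>i\<in>UNIV. real (d2$i)) = (\<Sum>i\<in>UNIV. \<bar>real (k$i) - real (m$i)\<bar>)"
    unfolding sum.distrib[symmetric] by (rule sum.cong) (simp_all add: p_def d1_def d2_def minabs)
  have "\<bar>f k - f m\<bar> \<le> \<bar>f (p + d1) - f p\<bar> + \<bar>f (p + d2) - f p\<bar>" using k m by simp
  also have "\<dots> \<le> D * (\<Sum>i\<in>UNIV. real (d1$i)) + D * (\<Sum>i\<in>UNIV. real (d2$i))"
    by (intro add_mono up)
  also have "\<dots> = D * (\<Sum>i\<in>UNIV. \<bar>real (k$i) - real (m$i)\<bar>)" using s by (simp add: distrib_left[symmetric])
  finally show ?thesis .
qed
lemma fekete_real: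
  fixes h :: "real \<Rightarrow> real"
  assumes nn: "\<And>t. t \<ge> 0 \<Longrightarrow> h t \<ge> 0"
    and sub: "\<And>s t. s \<ge> 0 \<Longrightarrow> t \<ge> 0 \<Longrightarrow> h (s + t) \<le> h s + h t"
    and bnd: "\<And>t. t \<ge> 0 \<Longrightarrow> h t \<le> A + B * t"
  shows "((\<lambda>t. h t / t) \<longlongrightarrow> Inf ((\<lambda>t. h t / t) ` {0<..})) at_top"
proof -
  define L where "L = Inf ((\<lambda>t. h t / t) ` {0<..})"
  have pos: "0 \<le> x" if xa: "x \<in> (\<lambda>t. h t / t) ` {0<..}" for x
  proof -
    obtain t where t: "t > 0" "x = h t / t" using xa by auto
    show ?thesis using nn[of t] t by simp
  qed
  have ne: "(\<lambda>t. h t / t) ` {0<..} \<noteq> {}" by auto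
  have bdd: "bdd_below ((\<lambda>t. h t / t) ` {0<..})" by (rule bdd_belowI[of _ 0]) (rule pos)
  have low: "L \<le> h t / t" if "t > 0" for t unfolding L_def using bdd that by (intro cInf_lower) auto
  have L0: "L \<ge> 0" unfolding L_def using ne pos by (rule cInf_greatest)
  have mult: "h (real q * s + r) \<le> real q * h s + h r" if "s \<ge> 0" "r \<ge> 0" for q :: nat and s r
  proof (induction q)
    case 0 show ?case by simp
  next
    case (Suc q)
    have "h (real (Suc q) * s + r) = h (s + (real q * s + r))" by (simp add: algebra_simps)
    also have "\<dots> \<le> h s + h (real q * s + r)" using that by (intro sub) auto
    also have "\<dots> \<le> real (Suc q) * h s + h r" using Suc by (simp add: algebra_simps)
    finally show ?case .
  qed
  show ?thesis unfolding L_def[symmetric]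
  proof (rule tendstoI)
    fix e :: real assume e: "e > 0"
    have "\<exists>x\<in>(\<lambda>t. h t / t) ` {0<..}. x < L + e/2" unfolding L_def using ne e by (intro cInf_lessD) auto
    then obtain s where s: "s > 0" "h s / s < L + e/2" by auto
    define M where "M = A + abs B * s"
    have M: "h r \<le> M" if "0 \<le> r" "r \<le> s" for r
    proof -
      have "h r \<le> A + B*r" using bnd that by auto
      moreover have "B * r \<le> abs B * r" using that by (intro mult_right_mono) auto
      moreover have "abs B * r \<le> abs B * s" using that by (intro mult_left_mono) auto
      ultimately show ?thesis unfolding M_def by linarith
    qed
    have M0: "M \<ge> 0" using M[of 0] nn[of 0] s by auto
    have hs0: "h s / s \<ge> 0" using nn[of s] s by auto
    show "eventually (\<lambda>t. dist (h t / t) L < e) at_top"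
      using eventually_ge_at_top[of "max s (2*M/e + 1)"]
    proof eventually_elim
      case (elim t)
      then have t: "t \<ge> s" "t \<ge> 2*M/e + 1" by auto
      then have tpos: "t > 0" using s by linarith
      have Mt: "M < e * t / 2" using t(2) e by (simp add: field_simps)
      define q where "q = nat \<lfloor>t / s\<rfloor>"
      define r where "r = t - real q * s"
      have ts0: "t / s \<ge> 0" using tpos s by auto
      have fl: "of_int \<lfloor>t/s\<rfloor> \<le> t/s" "t/s < of_int \<lfloor>t/s\<rfloor> + 1" by linarith+
      have qq: "real q = of_int \<lfloor>t/s\<rfloor>" unfolding q_def using ts0 by simp
      have "real q * s \<le> (t/s) * s" unfolding qq using fl(1) s by (intro mult_right_mono) auto
      then have "real q * s \<le> t" using s by simp
      moreover have "(t/s) * s < (real q + 1) * s" unfolding qq using fl(2) s by (intro mult_strict_right_mono) auto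
      then have "t < real q * s + s" using s by (simp add: algebra_simps)
      ultimately have r: "0 \<le> r" "r \<le> s" unfolding r_def by auto
      have qst: "real q * s \<le> t" using \<open>real q * s \<le> t\<close> .
      have "h t = h (real q * s + r)" unfolding r_def by simp
      also have "\<dots> \<le> real q * h s + h r" using mult[of s r q] s r by auto
      also have "\<dots> \<le> (real q * s) * (h s / s) + M" using M[OF r] s by simp
      also have "\<dots> \<le> t * (h s / s) + M" using qst hs0 by (intro add_right_mono mult_right_mono) auto
      also have "\<dots> \<le> t * (L + e/2) + M" using s(2) tpos by (intro add_right_mono mult_left_mono) auto
      also have "\<dots> < t * (L + e)" using Mt by (simp add: algebra_simps)
      finally have "h t / t < L + e" using tpos by (simp add: divide_less_eq mult.commute)
      moreover have "L \<le> h t / t" using low tpos by auto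
      ultimately show ?case by (simp add: dist_real_def abs_if)
    qed
  qed
qed

lemma fext_lip:
  fixes f :: "nat^'n \<Rightarrow> real" and r s :: "real^'n"
  assumes step: "\<And>k i. \<bar>f (k + axis i 1) - f k\<bar> \<le> D" and D0: "0 \<le> D" and t: "0 \<le> t"
  shows "\<bar>fext f (t *\<^sub>R r) - fext f (t *\<^sub>R s)\<bar> \<le> D * (t * (\<Sum>i\<in>UNIV. \<bar>r$i - s$i\<bar>) + real CARD('n))"
proof -
  have "\<bar>fext f (t *\<^sub>R r) - fext f (t *\<^sub>R s)\<bar> \<le> D * (\<Sum>i\<in>UNIV. \<bar>real ((\<chi> i. nat \<lceil>(t *\<^sub>R r)$i\<rceil>)$i) - real ((\<chi> i. nat \<lceil>(t *\<^sub>R s)$i\<rceil>)$i)\<bar>)"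
    unfolding fext_def by (rule lip_nat[OF step])
  also have "\<dots> \<le> D * (\<Sum>i\<in>UNIV. t * \<bar>r$i - s$i\<bar> + 1)"
  proof (intro mult_left_mono sum_mono D0)
    fix i
    have e: "\<bar>t * r$i - t * s$i\<bar> = t * \<bar>r$i - s$i\<bar>" using t by (simp add: right_diff_distrib[symmetric] abs_mult)
    show "\<bar>real ((\<chi> i. nat \<lceil>(t *\<^sub>R r)$i\<rceil>)$i) - real ((\<chi> i. nat \<lceil>(t *\<^sub>R s)$i\<rceil>)$i)\<bar> \<le> t * \<bar>r$i - s$i\<bar> + 1"
      using c1[of "t * r$i" "t * s$i"] e by simp
  qed
  also have "\<dots> = D * (t * (\<Sum>i\<in>UNIV. \<bar>r$i - s$i\<bar>) + real CARD('n))"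
    by (simp add: sum.distrib sum_distrib_left)
  finally show ?thesis .
qed

lemma fext_sub:
  fixes f :: "nat^'n \<Rightarrow> real" and a b :: "real^'n"
  assumes step: "\<And>k i. \<bar>f (k + axis i 1) - f k\<bar> \<le> D" and D0: "0 \<le> D"
    and subadd: "subadditive_nat f"
    and sgn: "\<And>i. (0 \<le> a$i \<and> 0 \<le> b$i) \<or> (a$i \<le> 0 \<and> b$i \<le> 0)"
  shows "fext f (a + b) \<le> fext f a + fext f b + D * real CARD('n)"
proof -
  define k where "k = (\<chi> i. nat \<lceil>(a + b)$i\<rceil>)"
  define u where "u = (\<chi> i. nat \<lceil>a$i\<rceil>)"
  define w where "w = (\<chi> i. nat \<lceil>b$i\<rceil>)"
  have "f k - f (u + w) \<le> \<bar>f k - f (u + w)\<bar>" by simp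
  also have "\<dots> \<le> D * (\<Sum>i\<in>UNIV. \<bar>real (k$i) - real ((u + w)$i)\<bar>)" by (rule lip_nat[OF step])
  also have "\<dots> \<le> D * (\<Sum>i\<in>(UNIV::'n set). 1)"
  proof (intro mult_left_mono sum_mono D0)
    fix i
    show "\<bar>real (k$i) - real ((u + w)$i)\<bar> \<le> 1"
      using c2[OF sgn[of i]] by (simp add: k_def u_def w_def)
  qed
  also have "\<dots> = D * real CARD('n)" by simp
  finally have 1: "f k \<le> f (u + w) + D * real CARD('n)" by simp
  have 2: "f (u + w) \<le> f u + f w" using subadd unfolding subadditive_nat_def by blast
  show ?thesis unfolding fext_def using 1 2 by (simp add: k_def u_def w_def)
qed

lemma const_over_t: "((\<lambda>t::real. c / t) \<longlongrightarrow> 0) at_top"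
  by (rule tendsto_divide_0[OF tendsto_const filterlim_at_top_imp_at_infinity[OF filterlim_ident]])

lemma lim_g:
  fixes f :: "nat^'n \<Rightarrow> real" and r :: "real^'n"
  assumes step: "\<And>k i. \<bar>f (k + axis i 1) - f k\<bar> \<le> D" and D0: "0 \<le> D"
    and subadd: "subadditive_nat f" and nonneg: "\<And>k. 0 \<le> f k"
  shows "((\<lambda>t. fext f (t *\<^sub>R r) / t) \<longlongrightarrow> fhat f r) at_top"
proof -
  define N where "N = real CARD('n)"
  define h where "h = (\<lambda>t. fext f (t *\<^sub>R r) + D * N)"
  have N0: "N \<ge> 0" unfolding N_def by simp
  have "((\<lambda>t. h t / t) \<longlongrightarrow> Inf ((\<lambda>t. h t / t) ` {0<..})) at_top"
  proof (rule fekete_real)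
    fix t :: real assume "t \<ge> 0"
    show "h t \<ge> 0" unfolding h_def fext_def using nonneg D0 N0 by (simp add: add_nonneg_nonneg)
  next
    fix s t :: real assume st: "s \<ge> 0" "t \<ge> 0"
    have e: "(s + t) *\<^sub>R r = s *\<^sub>R r + t *\<^sub>R r" by (simp add: scaleR_left_distrib)
    have "fext f ((s + t) *\<^sub>R r) \<le> fext f (s *\<^sub>R r) + fext f (t *\<^sub>R r) + D * N"
      unfolding e N_def
    proof (rule fext_sub[OF step D0 subadd])
      fix i
      show "(0 \<le> (s *\<^sub>R r)$i \<and> 0 \<le> (t *\<^sub>R r)$i) \<or> ((s *\<^sub>R r)$i \<le> 0 \<and> (t *\<^sub>R r)$i \<le> 0)"
        using st by (cases "r$i \<ge> 0") (auto simp: mult_nonneg_nonpos)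
    qed
    then show "h (s + t) \<le> h s + h t" unfolding h_def using D0 N0 by (simp add: mult_nonneg_nonneg)
  next
    fix t :: real assume t: "t \<ge> 0"
    have "\<bar>fext f (t *\<^sub>R r) - fext f (t *\<^sub>R 0)\<bar> \<le> D * (t * (\<Sum>i\<in>UNIV. \<bar>r$i - (0::real^'n)$i\<bar>) + N)"
      unfolding N_def by (rule fext_lip[OF step D0 t])
    then show "h t \<le> (fext f 0 + 2 * D * N) + (D * (\<Sum>i\<in>UNIV. \<bar>r$i\<bar>)) * t"
      unfolding h_def by (simp add: algebra_simps)
  qed
  moreover have "((\<lambda>t. D * N / t) \<longlongrightarrow> 0) at_top" by (rule const_over_t)
  ultimately have "((\<lambda>t. h t / t - D * N / t) \<longlongrightarrow> Inf ((\<lambda>t. h t / t) ` {0<..}) - 0) at_top"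
    by (rule tendsto_diff)
  moreover have "(\<lambda>t. h t / t - D * N / t) = (\<lambda>t. fext f (t *\<^sub>R r) / t)"
    unfolding h_def by (simp add: diff_divide_distrib[symmetric])
  ultimately have L: "((\<lambda>t. fext f (t *\<^sub>R r) / t) \<longlongrightarrow> Inf ((\<lambda>t. h t / t) ` {0<..})) at_top" by simp
  then have "fhat f r = Inf ((\<lambda>t. h t / t) ` {0<..})"
    unfolding fhat_def by (intro tendsto_Lim) auto
  with L show ?thesis by simp
qed

lemma homog:
  fixes f :: "nat^'n \<Rightarrow> real" and r :: "real^'n"
  assumes step: "\<And>k i. \<bar>f (k + axis i 1) - f k\<bar> \<le> D" and D0: "0 \<le> D"
    and subadd: "subadditive_nat f" and nonneg: "\<And>k. 0 \<le> f k" and c: "c > 0"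
  shows "fhat f (c *\<^sub>R r) = c * fhat f r"
proof -
  have lim: "((\<lambda>t. fext f (t *\<^sub>R r) / t) \<longlongrightarrow> fhat f r) at_top" by (rule lim_g[OF step D0 subadd nonneg])
  have fl: "filterlim (\<lambda>t::real. c * t) at_top at_top"
    by (rule filterlim_tendsto_pos_mult_at_top[OF tendsto_const c filterlim_ident])
  have "((\<lambda>t. c * ((\<lambda>u. fext f (u *\<^sub>R r) / u) (c * t))) \<longlongrightarrow> c * fhat f r) at_top"
    by (intro tendsto_mult tendsto_const filterlim_compose[OF lim fl])
  moreover have "(\<lambda>t. c * ((\<lambda>u. fext f (u *\<^sub>R r) / u) (c * t))) = (\<lambda>t. fext f (t *\<^sub>R (c *\<^sub>R r)) / t)"
    using c by (auto simp: fun_eq_iff mult.commute)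
  ultimately have "((\<lambda>t. fext f (t *\<^sub>R (c *\<^sub>R r)) / t) \<longlongrightarrow> c * fhat f r) at_top" by simp
  moreover have "((\<lambda>t. fext f (t *\<^sub>R (c *\<^sub>R r)) / t) \<longlongrightarrow> fhat f (c *\<^sub>R r)) at_top"
    by (rule lim_g[OF step D0 subadd nonneg])
  ultimately show ?thesis using tendsto_unique by (metis trivial_limit_at_top_linorder)
qed

theorem mainTheorem11:
  fixes f :: "nat^'n \<Rightarrow> real" and D0 :: real
  assumes nonneg: "\<And>k. 0 \<le> f k"
    and subadd: "subadditive_nat f"
    and D0: "\<And>k i. f k - f (k + axis i 1) \<le> D0"
  defines "D \<equiv> max (Max (range (\<lambda>i. f (axis i 1)))) D0"
  shows "(\<forall>r\<in>nonneg_orthant. \<forall>s\<in>nonneg_orthant. fhat f (r + s) \<le> fhat f r + fhat f s)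
    \<and> convex_on nonneg_orthant (fhat f)
    \<and> (\<forall>r\<in>nonneg_orthant. \<forall>s\<in>nonneg_orthant.
           \<bar>fhat f r - fhat f s\<bar> \<le> D * (\<Sum>i\<in>UNIV. \<bar>r $ i - s $ i\<bar>))
    \<and> (\<forall>rs lam. (\<forall>t. rs t \<in> nonneg_orthant) \<longrightarrow> rs \<longlonglongrightarrow> lam \<longrightarrow>
           (\<lambda>t. fext f (real t *\<^sub>R rs t) / real t) \<longlonglongrightarrow> fhat f lam)"
proof -
  have Dge: "f (axis i 1) \<le> D" for i
  proof -
    have "f (axis i 1) \<le> Max (range (\<lambda>i. f (axis i 1)))" by (rule Max_ge) auto
    then show ?thesis unfolding D_def by linarith
  qed
  have D0le: "D0 \<le> D" unfolding D_def by simp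
  have Dnn: "0 \<le> D" using Dge[of undefined] nonneg[of "axis undefined 1"] by linarith
  have step: "\<bar>f (k + axis i 1) - f k\<bar> \<le> D" for k i
  proof -
    have "f (k + axis i 1) \<le> f k + f (axis i 1)" using subadd unfolding subadditive_nat_def by blast
    moreover have "f k - f (k + axis i 1) \<le> D0" by (rule D0)
    ultimately show ?thesis using Dge[of i] D0le by linarith
  qed
  define N where "N = real CARD('n)"
  have lim: "((\<lambda>t. fext f (t *\<^sub>R r) / t) \<longlongrightarrow> fhat f r) at_top" for r
    by (rule lim_g[OF step Dnn subadd nonneg])
  have hom: "fhat f (c *\<^sub>R r) = c * fhat f r" if "c > 0" for c r
    by (rule homog[OF step Dnn subadd nonneg that])
  have sub: "fhat f (r + s) \<le> fhat f r + fhat f s" if r: "r \<in> nonneg_orthant" and s: "s \<in> nonneg_orthant" for r s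
  proof (rule tendsto_le[OF trivial_limit_at_top_linorder])
    have "((\<lambda>t. fext f (t *\<^sub>R r) / t + fext f (t *\<^sub>R s) / t + D * N / t) \<longlongrightarrow> fhat f r + fhat f s + 0) at_top"
      by (intro tendsto_add lim const_over_t)
    then show "((\<lambda>t. fext f (t *\<^sub>R r) / t + fext f (t *\<^sub>R s) / t + D * N / t) \<longlongrightarrow> fhat f r + fhat f s) at_top"
      by simp
    show "((\<lambda>t. fext f (t *\<^sub>R (r + s)) / t) \<longlongrightarrow> fhat f (r + s)) at_top" by (rule lim)
    show "eventually (\<lambda>t. fext f (t *\<^sub>R (r + s)) / t \<le> fext f (t *\<^sub>R r) / t + fext f (t *\<^sub>R s) / t + D * N / t) at_top"
      using eventually_gt_at_top[of 0]
    proof eventually_elim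
      case (elim t)
      have "fext f (t *\<^sub>R r + t *\<^sub>R s) \<le> fext f (t *\<^sub>R r) + fext f (t *\<^sub>R s) + D * N"
        unfolding N_def
      proof (rule fext_sub[OF step Dnn subadd])
        fix i
        show "(0 \<le> (t *\<^sub>R r)$i \<and> 0 \<le> (t *\<^sub>R s)$i) \<or> ((t *\<^sub>R r)$i \<le> 0 \<and> (t *\<^sub>R s)$i \<le> 0)"
          using r s elim by (simp add: nonneg_orthant_def)
      qed
      then have "fext f (t *\<^sub>R (r + s)) / t \<le> (fext f (t *\<^sub>R r) + fext f (t *\<^sub>R s) + D * N) / t"
        using elim by (intro divide_right_mono) (auto simp: scaleR_right_distrib)
      then show ?case by (simp add: add_divide_distrib)
    qed
  qed
  have cvx: "convex (nonneg_orthant :: (real^'n) set)"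
    unfolding convex_def nonneg_orthant_def by (auto intro!: add_nonneg_nonneg mult_nonneg_nonneg)
  have orth_scale: "c *\<^sub>R r \<in> nonneg_orthant" if "c \<ge> 0" "r \<in> nonneg_orthant" for c r
    using that by (simp add: nonneg_orthant_def)
  have conv: "convex_on nonneg_orthant (fhat f)"
  proof (rule convex_onI[OF _ cvx])
    fix t :: real and x y :: "real^'n" assume t: "0 < t" "t < 1" and x: "x \<in> nonneg_orthant" and y: "y \<in> nonneg_orthant"
    have "fhat f ((1 - t) *\<^sub>R x + t *\<^sub>R y) \<le> fhat f ((1 - t) *\<^sub>R x) + fhat f (t *\<^sub>R y)"
      using t x y by (intro sub orth_scale) auto
    also have "\<dots> = (1 - t) * fhat f x + t * fhat f y" using t by (simp add: hom)
    finally show "fhat f ((1 - t) *\<^sub>R x + t *\<^sub>R y) \<le> (1 - t) * fhat f x + t * fhat f y" .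
  qed
  have lip: "\<bar>fhat f r - fhat f s\<bar> \<le> D * (\<Sum>i\<in>UNIV. \<bar>r $ i - s $ i\<bar>)" for r s :: "real^'n"
  proof (rule tendsto_le[OF trivial_limit_at_top_linorder])
    have "((\<lambda>t. D * (\<Sum>i\<in>UNIV. \<bar>r $ i - s $ i\<bar>) + D * N / t) \<longlongrightarrow> D * (\<Sum>i\<in>UNIV. \<bar>r $ i - s $ i\<bar>) + 0) at_top"
      by (intro tendsto_add tendsto_const const_over_t)
    then show "((\<lambda>t. D * (\<Sum>i\<in>UNIV. \<bar>r $ i - s $ i\<bar>) + D * N / t) \<longlongrightarrow> D * (\<Sum>i\<in>UNIV. \<bar>r $ i - s $ i\<bar>)) at_top"
      by simp
    show "((\<lambda>t. \<bar>fext f (t *\<^sub>R r) / t - fext f (t *\<^sub>R s) / t\<bar>) \<longlongrightarrow> \<bar>fhat f r - fhat f s\<bar>) at_top"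
      by (intro tendsto_rabs tendsto_diff lim)
    show "eventually (\<lambda>t. \<bar>fext f (t *\<^sub>R r) / t - fext f (t *\<^sub>R s) / t\<bar> \<le> D * (\<Sum>i\<in>UNIV. \<bar>r $ i - s $ i\<bar>) + D * N / t) at_top"
      using eventually_gt_at_top[of 0]
    proof eventually_elim
      case (elim t)
      have "\<bar>fext f (t *\<^sub>R r) - fext f (t *\<^sub>R s)\<bar> \<le> D * (t * (\<Sum>i\<in>UNIV. \<bar>r$i - s$i\<bar>) + N)"
        unfolding N_def using elim by (intro fext_lip[OF step Dnn]) auto
      then have "\<bar>fext f (t *\<^sub>R r) - fext f (t *\<^sub>R s)\<bar> / t \<le> D * (t * (\<Sum>i\<in>UNIV. \<bar>r$i - s$i\<bar>) + N) / t"
        using elim by (intro divide_right_mono) auto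
      moreover have "\<bar>fext f (t *\<^sub>R r) - fext f (t *\<^sub>R s)\<bar> / t = \<bar>fext f (t *\<^sub>R r) / t - fext f (t *\<^sub>R s) / t\<bar>"
        using elim by (simp add: diff_divide_distrib[symmetric])
      moreover have "D * (t * (\<Sum>i\<in>UNIV. \<bar>r$i - s$i\<bar>) + N) / t = D * (\<Sum>i\<in>UNIV. \<bar>r $ i - s $ i\<bar>) + D * N / t"
        using elim by (simp add: field_simps)
      ultimately show ?case by simp
    qed
  qed
  have seq: "(\<lambda>t. fext f (real t *\<^sub>R rs t) / real t) \<longlonglongrightarrow> fhat f lam" if rs: "rs \<longlonglongrightarrow> lam" for rs lam
  proof -
    have b: "(\<lambda>t. fext f (real t *\<^sub>R lam) / real t) \<longlonglongrightarrow> fhat f lam"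
      using filterlim_compose[OF lim[of lam] filterlim_real_sequentially] by simp
    have sm: "(\<lambda>t. \<Sum>i\<in>UNIV. \<bar>rs t $ i - lam $ i\<bar>) \<longlonglongrightarrow> (\<Sum>i\<in>UNIV. \<bar>lam $ i - lam $ i\<bar>)"
      by (intro tendsto_intros rs)
    have bnd: "(\<lambda>t. D * (\<Sum>i\<in>UNIV. \<bar>rs t $ i - lam $ i\<bar>) + D * N / real t) \<longlonglongrightarrow> D * 0 + 0"
      using sm by (intro tendsto_add tendsto_mult tendsto_const lim_const_over_n) simp_all
    have d: "(\<lambda>t. fext f (real t *\<^sub>R rs t) / real t - fext f (real t *\<^sub>R lam) / real t) \<longlonglongrightarrow> 0"
    proof (rule Lim_null_comparison)
      show "(\<lambda>t. D * (\<Sum>i\<in>UNIV. \<bar>rs t $ i - lam $ i\<bar>) + D * N / real t) \<longlonglongrightarrow> 0" using bnd by simp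
      show "eventually (\<lambda>t. norm (fext f (real t *\<^sub>R rs t) / real t - fext f (real t *\<^sub>R lam) / real t)
          \<le> D * (\<Sum>i\<in>UNIV. \<bar>rs t $ i - lam $ i\<bar>) + D * N / real t) sequentially"
        using eventually_gt_at_top[of "0::nat"]
      proof eventually_elim
        case (elim t)
        then have tp: "real t > 0" by simp
        have "\<bar>fext f (real t *\<^sub>R rs t) - fext f (real t *\<^sub>R lam)\<bar> \<le> D * (real t * (\<Sum>i\<in>UNIV. \<bar>rs t $ i - lam $ i\<bar>) + N)"
          unfolding N_def by (intro fext_lip[OF step Dnn]) auto
        then have "\<bar>fext f (real t *\<^sub>R rs t) - fext f (real t *\<^sub>R lam)\<bar> / real t \<le> D * (real t * (\<Sum>i\<in>UNIV. \<bar>rs t $ i - lam $ i\<bar>) + N) / real t"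
          using tp by (intro divide_right_mono) auto
        moreover have "\<bar>fext f (real t *\<^sub>R rs t) - fext f (real t *\<^sub>R lam)\<bar> / real t = norm (fext f (real t *\<^sub>R rs t) / real t - fext f (real t *\<^sub>R lam) / real t)"
          using tp by (simp add: diff_divide_distrib[symmetric])
        moreover have "D * (real t * (\<Sum>i\<in>UNIV. \<bar>rs t $ i - lam $ i\<bar>) + N) / real t = D * (\<Sum>i\<in>UNIV. \<bar>rs t $ i - lam $ i\<bar>) + D * N / real t"
          using tp by (simp add: field_simps)
        ultimately show ?case by simp
      qed
    qed
    have "(\<lambda>t. fext f (real t *\<^sub>R lam) / real t + (fext f (real t *\<^sub>R rs t) / real t - fext f (real t *\<^sub>R lam) / real t)) \<longlonglongrightarrow> fhat f lam + 0"
      by (intro tendsto_add b d)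
    then show ?thesis by simp
  qed
  show ?thesis using sub conv lip seq by blast
qed

end
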